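(* Let $G$ be a group with neutral element $e$ and let $S=\bigoplus_{g\in G}S_g$ be an epsilon-strongly $G$-graded ring. (a) If $S_e$ is block decomposable, then $S$ is epsilon-finitely $G$-graded. (b) If $S_e$ is left or right noetherian, then $S$ is epsilon-finitely $G$-graded. In particular, if $S_e$ is left or right noetherian and $N$ is any normal subgroup of $G$, then the induced $G/N$-grading of $S$ is epsilon-strong.
   Context: Rings are associative, not necessarily unital; $AB$ denotes finite sums of products. A $G$-grading ($S=\bigoplus_gS_g$, $S_gS_h\subseteq S_{gh}$) is epsilon-strong if $S_gS_{g^{-1}}S_g=S_g$ for all $g$ and each ring $S_gS_{g^{-1}}$ has a multiplicative identity element $\epsilon_g$ (then $S$ and $S_e$ are unital and the $\epsilon_g$ are central idempotents of $S_e$). It is epsilon-finite if it is epsilon-strong and $\bigvee\{\epsilon_g\mid g\in G\}$ (the set of finite joins, $a\vee b=a+b-ab$) is finite. A unital ring $R$ is block decomposable if $1=c_1+\cdots+c_r$ with each $c_i$ a central primitive idempotent. Induced grading: $S_C=\bigoplus_{g\in C}S_g$ for $C\in G/N$. *)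

theory Defs
  imports "HOL-Algebra.Coset"
begin

text \<open>The ring S is the whole (possibly non-unital) type 'a of class ring.
  AB = set of finite sums of products a*b with a in A, b in B.\<close>

definition setmul :: "'a::ring set \<Rightarrow> 'a set \<Rightarrow> 'a set" where
  "setmul A B = {x. \<exists>(n::nat) a b. (\<forall>i<n. a i \<in> A \<and> b i \<in> B) \<and> x = (\<Sum>i<n. a i * b i)}"

definition graded_ring :: "('g, 'm) monoid_scheme \<Rightarrow> ('g \<Rightarrow> 'a::ring set) \<Rightarrow> bool" where
  "graded_ring G S \<longleftrightarrow> group G
    \<and> (\<forall>g\<in>carrier G. 0 \<in> S g \<and> (\<forall>x\<in>S g. \<forall>y\<in>S g. x + y \<in> S g \<and> - x \<in> S g))
    \<and> (\<forall>g\<in>carrier G. \<forall>h\<in>carrier G. \<forall>x\<in>S g. \<forall>y\<in>S h. x * y \<in> S (g \<otimes>\<^bsub>G\<^esub> h))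
    \<and> (\<forall>x. \<exists>F f. finite F \<and> F \<subseteq> carrier G \<and> (\<forall>g\<in>F. f g \<in> S g) \<and> x = sum f F)
    \<and> (\<forall>F f. finite F \<and> F \<subseteq> carrier G \<and> (\<forall>g\<in>F. f g \<in> S g) \<and> sum f F = 0
              \<longrightarrow> (\<forall>g\<in>F. f g = 0))"

definition is_identity_of :: "'a::ring \<Rightarrow> 'a set \<Rightarrow> bool" where
  "is_identity_of u R \<longleftrightarrow> u \<in> R \<and> (\<forall>x\<in>R. u * x = x \<and> x * u = x)"

definition epsilon_strong :: "('g, 'm) monoid_scheme \<Rightarrow> ('g \<Rightarrow> 'a::ring set) \<Rightarrow> bool" where
  "epsilon_strong G S \<longleftrightarrow> graded_ring G S \<and>
     (\<forall>g\<in>carrier G.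
        setmul (setmul (S g) (S (inv\<^bsub>G\<^esub> g))) (S g) = S g
      \<and> (\<exists>u. is_identity_of u (setmul (S g) (S (inv\<^bsub>G\<^esub> g)))))"

definition eps :: "('g, 'm) monoid_scheme \<Rightarrow> ('g \<Rightarrow> 'a::ring set) \<Rightarrow> 'g \<Rightarrow> 'a" where
  "eps G S g = (THE u. is_identity_of u (setmul (S g) (S (inv\<^bsub>G\<^esub> g))))"

inductive_set join_closure :: "'a::ring set \<Rightarrow> 'a set" for X where
  base: "x \<in> X \<Longrightarrow> x \<in> join_closure X"
| join: "a \<in> join_closure X \<Longrightarrow> b \<in> join_closure X \<Longrightarrow> a + b - a * b \<in> join_closure X"

definition epsilon_finite :: "('g, 'm) monoid_scheme \<Rightarrow> ('g \<Rightarrow> 'a::ring set) \<Rightarrow> bool" where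
  "epsilon_finite G S \<longleftrightarrow> epsilon_strong G S \<and>
     finite (join_closure (eps G S ` carrier G))"

definition central_idempotent :: "'a::ring set \<Rightarrow> 'a \<Rightarrow> bool" where
  "central_idempotent R c \<longleftrightarrow> c \<in> R \<and> c * c = c \<and> (\<forall>x\<in>R. c * x = x * c)"

definition central_primitive_idempotent :: "'a::ring set \<Rightarrow> 'a \<Rightarrow> bool" where
  "central_primitive_idempotent R c \<longleftrightarrow> central_idempotent R c \<and> c \<noteq> 0 \<and>
     \<not> (\<exists>c1 c2. central_idempotent R c1 \<and> central_idempotent R c2 \<and> c1 \<noteq> 0 \<and> c2 \<noteq> 0
              \<and> c1 * c2 = 0 \<and> c2 * c1 = 0 \<and> c = c1 + c2)"

definition block_decomposable :: "'a::ring set \<Rightarrow> bool" where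
  "block_decomposable R \<longleftrightarrow> (\<exists>(r::nat) c. (\<forall>i<r. central_primitive_idempotent R (c i))
      \<and> is_identity_of (\<Sum>i<r. c i) R)"

definition left_ideal_of :: "'a::ring set \<Rightarrow> 'a set \<Rightarrow> bool" where
  "left_ideal_of R I \<longleftrightarrow> I \<subseteq> R \<and> 0 \<in> I \<and> (\<forall>x\<in>I. \<forall>y\<in>I. x + y \<in> I \<and> - x \<in> I)
     \<and> (\<forall>r\<in>R. \<forall>x\<in>I. r * x \<in> I)"

definition right_ideal_of :: "'a::ring set \<Rightarrow> 'a set \<Rightarrow> bool" where
  "right_ideal_of R I \<longleftrightarrow> I \<subseteq> R \<and> 0 \<in> I \<and> (\<forall>x\<in>I. \<forall>y\<in>I. x + y \<in> I \<and> - x \<in> I)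
     \<and> (\<forall>r\<in>R. \<forall>x\<in>I. x * r \<in> I)"

definition left_noetherian :: "'a::ring set \<Rightarrow> bool" where
  "left_noetherian R \<longleftrightarrow> (\<forall>I :: nat \<Rightarrow> 'a set. (\<forall>n. left_ideal_of R (I n)) \<and> (\<forall>n. I n \<subseteq> I (Suc n))
      \<longrightarrow> (\<exists>m. \<forall>n\<ge>m. I n = I m))"

definition right_noetherian :: "'a::ring set \<Rightarrow> bool" where
  "right_noetherian R \<longleftrightarrow> (\<forall>I :: nat \<Rightarrow> 'a set. (\<forall>n. right_ideal_of R (I n)) \<and> (\<forall>n. I n \<subseteq> I (Suc n))
      \<longrightarrow> (\<exists>m. \<forall>n\<ge>m. I n = I m))"

definition induced_grading :: "('g \<Rightarrow> 'a::ring set) \<Rightarrow> 'g set \<Rightarrow> 'a set" where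
  "induced_grading S C = {x. \<exists>F f. finite F \<and> F \<subseteq> C \<and> (\<forall>g\<in>F. f g \<in> S g) \<and> x = sum f F}"

end

theory Submission
  imports Defs
begin
lemma setmul_induct[consumes 1, case_names zero step]:
  assumes "x \<in> setmul A B" "P 0"
    "\<And>x a b. P x \<Longrightarrow> a \<in> A \<Longrightarrow> b \<in> B \<Longrightarrow> P (x + a * b)"
  shows "P x"
proof -
  obtain n and a b :: "nat \<Rightarrow> 'a" where ab: "\<forall>i<n. a i \<in> A \<and> b i \<in> B" and x: "x = (\<Sum>i<n. a i * b i)"
    using assms(1) unfolding setmul_def by blast
  have "\<forall>m\<le>n. P (\<Sum>i<m. a i * b i)"
  proof (intro allI impI)
    fix m assume "m \<le> n" thus "P (\<Sum>i<m. a i * b i)"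
    proof (induction m)
      case 0 thus ?case using assms(2) by simp
    next
      case (Suc m) thus ?case using assms(3) ab by simp
    qed
  qed
  thus ?thesis using x by simp
qed

lemma setmul_zero[simp]: "0 \<in> setmul A B"
  unfolding setmul_def by (rule CollectI, rule exI[of _ 0]) simp

lemma setmul_snoc: assumes "x \<in> setmul A B" "a \<in> A" "b \<in> B" shows "x + a * b \<in> setmul A B"
proof -
  obtain n and f g :: "nat \<Rightarrow> 'a" where ab: "\<forall>i<n. f i \<in> A \<and> g i \<in> B" and x: "x = (\<Sum>i<n. f i * g i)"
    using assms(1) unfolding setmul_def by blast
  let ?f = "f(n:=a)" and ?g = "g(n:=b)"
  have "x + a * b = (\<Sum>i<Suc n. ?f i * ?g i)" using x by simp
  moreover have "\<forall>i<Suc n. ?f i \<in> A \<and> ?g i \<in> B" using ab assms by (auto simp: less_Suc_eq)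
  ultimately show ?thesis unfolding setmul_def by blast
qed

lemma setmul_prod: "a \<in> A \<Longrightarrow> b \<in> B \<Longrightarrow> a * b \<in> setmul A B"
  using setmul_snoc[OF setmul_zero] by fastforce

lemma setmul_add: assumes "x \<in> setmul A B" "y \<in> setmul A B" shows "x + y \<in> setmul A B"
  using assms(2)
proof (induction rule: setmul_induct)
  case zero thus ?case using assms(1) by simp
next
  case (step y a b)
  have "x + (y + a * b) = (x + y) + a * b" by (simp add: add.assoc)
  thus ?case using step setmul_snoc by metis
qed

lemma setmul_sum: "finite F \<Longrightarrow> (\<And>i. i \<in> F \<Longrightarrow> f i \<in> setmul A B) \<Longrightarrow> sum f F \<in> setmul A B"
  by (induction F rule: finite_induct) (auto intro: setmul_add)

lemma setmul_neg: assumes "x \<in> setmul A B" "\<And>a. a \<in> A \<Longrightarrow> - a \<in> A" shows "- x \<in> setmul A B"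
  using assms(1)
proof (induction rule: setmul_induct)
  case zero thus ?case by simp
next
  case (step x a b)
  have "- (x + a * b) = - x + (- a) * b" by simp
  thus ?case using step setmul_snoc assms(2) by metis
qed

lemma setmul_mono: "A \<subseteq> A' \<Longrightarrow> B \<subseteq> B' \<Longrightarrow> setmul A B \<subseteq> setmul A' B'"
  unfolding setmul_def by blast

lemma setmul_subset:
  assumes "0 \<in> T" "\<And>x y. x \<in> T \<Longrightarrow> y \<in> T \<Longrightarrow> x + y \<in> T" "\<And>a b. a \<in> A \<Longrightarrow> b \<in> B \<Longrightarrow> a * b \<in> T"
  shows "setmul A B \<subseteq> T"
proof
  fix x assume "x \<in> setmul A B" thus "x \<in> T"
    by (induction rule: setmul_induct) (use assms in auto)
qed

lemma setmul_left_mult: assumes "x \<in> setmul A B" "\<And>a. a \<in> A \<Longrightarrow> r * a \<in> A"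
  shows "r * x \<in> setmul A B"
  using assms(1)
proof (induction rule: setmul_induct)
  case zero thus ?case by simp
next
  case (step x a b)
  have "r * (x + a * b) = r * x + (r * a) * b" by (simp add: distrib_left mult.assoc)
  thus ?case using step setmul_snoc assms(2) by metis
qed

lemma setmul_right_mult: assumes "x \<in> setmul A B" "\<And>b. b \<in> B \<Longrightarrow> b * r \<in> B"
  shows "x * r \<in> setmul A B"
  using assms(1)
proof (induction rule: setmul_induct)
  case zero thus ?case by simp
next
  case (step x a b)
  have "(x + a * b) * r = x * r + a * (b * r)" by (simp add: distrib_right mult.assoc)
  thus ?case using step setmul_snoc assms(2) by metis
qed

lemma setmul_assoc_sub: "setmul (setmul A B) C \<subseteq> setmul A (setmul B C)"
proof
  fix x assume "x \<in> setmul (setmul A B) C" thus "x \<in> setmul A (setmul B C)"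
  proof (induction rule: setmul_induct)
    case zero thus ?case by simp
  next
    case (step x y c)
    have "y * c \<in> setmul A (setmul B C)"
      using step(2)
    proof (induction rule: setmul_induct)
      case zero thus ?case by simp
    next
      case (step y a b)
      have "(y + a * b) * c = y * c + a * (b * c)" by (simp add: distrib_right mult.assoc)
      thus ?case using step setmul_snoc setmul_prod \<open>c \<in> C\<close> by metis
    qed
    thus ?case using step setmul_add by blast
  qed
qed

lemma setmul_left_id: assumes "x \<in> setmul A B" "\<And>a. a \<in> A \<Longrightarrow> u * a = a" shows "u * x = x"
  using assms(1)
  by (induction rule: setmul_induct) (simp_all add: distrib_left assms(2) mult.assoc[symmetric])

lemma setmul_right_id: assumes "x \<in> setmul A B" "\<And>b. b \<in> B \<Longrightarrow> b * u = b" shows "x * u = x"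
  using assms(1)
  by (induction rule: setmul_induct) (simp_all add: distrib_right assms(2) mult.assoc)

lemma identity_unique: "is_identity_of u R \<Longrightarrow> is_identity_of v R \<Longrightarrow> u = v"
  unfolding is_identity_of_def by metis

locale egr = group G for G :: "('g,'m) monoid_scheme" (structure) +
  fixes S :: "'g \<Rightarrow> 'a::ring set"
  assumes es: "epsilon_strong G S"
begin

lemma gr: "graded_ring G S" using es unfolding epsilon_strong_def by blast

lemma gr_parts1: "\<forall>g\<in>carrier G. 0 \<in> S g \<and> (\<forall>x\<in>S g. \<forall>y\<in>S g. x + y \<in> S g \<and> - x \<in> S g)"
  by (insert gr, unfold graded_ring_def, elim conjE, assumption)
lemma gr_parts2: "\<forall>g\<in>carrier G. \<forall>h\<in>carrier G. \<forall>x\<in>S g. \<forall>y\<in>S h. x * y \<in> S (g \<otimes> h)"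
  by (insert gr, unfold graded_ring_def, elim conjE, assumption)
lemma gr_parts3: "\<forall>x. \<exists>F f. finite F \<and> F \<subseteq> carrier G \<and> (\<forall>g\<in>F. f g \<in> S g) \<and> x = sum f F"
  by (insert gr, unfold graded_ring_def, elim conjE, assumption)
lemma gr_parts4: "\<forall>F f. finite F \<and> F \<subseteq> carrier G \<and> (\<forall>g\<in>F. f g \<in> S g) \<and> sum f F = 0
              \<longrightarrow> (\<forall>g\<in>F. f g = 0)"
  by (insert gr, unfold graded_ring_def, elim conjE, assumption)
lemmas gr_parts = gr_parts1 gr_parts2 gr_parts3 gr_parts4

lemma S_zero: "g \<in> carrier G \<Longrightarrow> 0 \<in> S g" using gr_parts(1) by simp
lemma S_add: "g \<in> carrier G \<Longrightarrow> x \<in> S g \<Longrightarrow> y \<in> S g \<Longrightarrow> x + y \<in> S g"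
  using gr_parts(1) by simp
lemma S_neg: "g \<in> carrier G \<Longrightarrow> x \<in> S g \<Longrightarrow> - x \<in> S g"
  using gr_parts(1) by simp
lemma S_mult: "g \<in> carrier G \<Longrightarrow> h \<in> carrier G \<Longrightarrow> x \<in> S g \<Longrightarrow> y \<in> S h \<Longrightarrow> x * y \<in> S (g \<otimes> h)"
  using gr_parts(2) by simp
lemma S_decomp: "\<exists>F f. finite F \<and> F \<subseteq> carrier G \<and> (\<forall>g\<in>F. f g \<in> S g) \<and> x = sum f F"
  using gr_parts(3) by simp
lemma S_indep: "finite F \<Longrightarrow> F \<subseteq> carrier G \<Longrightarrow> (\<forall>g\<in>F. f g \<in> S g) \<Longrightarrow> sum f F = 0 \<Longrightarrow> g \<in> F \<Longrightarrow> f g = 0"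
  using gr_parts(4) by blast

lemma S_sum: assumes "g \<in> carrier G" "finite F" "\<And>i. i \<in> F \<Longrightarrow> f i \<in> S g" shows "sum f F \<in> S g"
  using assms(2,3) by (induction F rule: finite_induct) (auto intro: S_add S_zero assms(1))

lemma S_diff: "g \<in> carrier G \<Longrightarrow> x \<in> S g \<Longrightarrow> y \<in> S g \<Longrightarrow> x - y \<in> S g"
  unfolding diff_conv_add_uminus by (intro S_add S_neg)

definition I where "I g = setmul (S g) (S (inv g))"

lemma strong: "g \<in> carrier G \<Longrightarrow> setmul (I g) (S g) = S g"
  using es unfolding epsilon_strong_def I_def by blast

lemma ident: "g \<in> carrier G \<Longrightarrow> is_identity_of (eps G S g) (I g)"
proof -
  assume g: "g \<in> carrier G"
  then obtain u where u: "is_identity_of u (I g)" using es unfolding epsilon_strong_def I_def by blast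
  have "eps G S g = u" unfolding eps_def I_def[symmetric]
    using u identity_unique by blast
  thus ?thesis using u by simp
qed

lemma I_sub: "g \<in> carrier G \<Longrightarrow> I g \<subseteq> S \<one>"
  unfolding I_def
proof (rule setmul_subset)
  fix a b assume "g \<in> carrier G" "a \<in> S g" "b \<in> S (inv g)"
  thus "a * b \<in> S \<one>" using S_mult[of g "inv g" a b] by simp
qed (auto intro: S_zero S_add)

lemma eps_in_I: "g \<in> carrier G \<Longrightarrow> eps G S g \<in> I g"
  using ident unfolding is_identity_of_def by blast

lemma eps_in: "g \<in> carrier G \<Longrightarrow> eps G S g \<in> S \<one>"
  using eps_in_I I_sub by blast

lemma eps_left: assumes "g \<in> carrier G" "s \<in> S g" shows "eps G S g * s = s"
proof -
  have "s \<in> setmul (I g) (S g)" using strong assms by blast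
  thus ?thesis by (rule setmul_left_id) (use ident[OF assms(1)] in \<open>auto simp: is_identity_of_def\<close>)
qed

lemma eps_right: assumes "g \<in> carrier G" "s \<in> S g" shows "s * eps G S (inv g) = s"
proof -
  have "s \<in> setmul (I g) (S g)" using strong assms by blast
  hence "s \<in> setmul (S g) (setmul (S (inv g)) (S g))" using setmul_assoc_sub unfolding I_def by blast
  moreover have "setmul (S (inv g)) (S g) = I (inv g)" unfolding I_def using assms by simp
  ultimately have "s \<in> setmul (S g) (I (inv g))" by simp
  thus ?thesis by (rule setmul_right_id) (use ident[of "inv g"] assms in \<open>auto simp: is_identity_of_def\<close>)
qed

lemma I_ideal_left: assumes "g \<in> carrier G" "r \<in> S \<one>" "x \<in> I g" shows "r * x \<in> I g"
  using assms(3) unfolding I_def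
  by (rule setmul_left_mult) (use S_mult[of \<one> g r] assms in auto)

lemma I_ideal_right: assumes "g \<in> carrier G" "r \<in> S \<one>" "x \<in> I g" shows "x * r \<in> I g"
  using assms(3) unfolding I_def
  by (rule setmul_right_mult) (use S_mult[of "inv g" \<one> _ r] assms in auto)

lemma eps_central: assumes "g \<in> carrier G" "r \<in> S \<one>" shows "eps G S g * r = r * eps G S g"
proof -
  let ?u = "eps G S g"
  have u: "?u \<in> I g" using eps_in_I assms by blast
  have 1: "?u * r = ?u * r * ?u" using ident[OF assms(1)] I_ideal_right[OF assms u]
    unfolding is_identity_of_def by metis
  have 2: "r * ?u = ?u * (r * ?u)" using ident[OF assms(1)] I_ideal_left[OF assms u]
    unfolding is_identity_of_def by metis
  show ?thesis using 1 2 by (simp add: mult.assoc)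
qed

lemma eps_idem: "g \<in> carrier G \<Longrightarrow> eps G S g * eps G S g = eps G S g"
  using ident eps_in_I unfolding is_identity_of_def by blast

lemma S1_eq: "I \<one> = S \<one>"
proof
  show "I \<one> \<subseteq> S \<one>" using I_sub by blast
  have "S \<one> = setmul (I \<one>) (S \<one>)" using strong by simp
  also have "\<dots> \<subseteq> I \<one>"
  proof (rule setmul_subset)
    show "0 \<in> I \<one>" unfolding I_def by simp
    show "x + y \<in> I \<one>" if "x \<in> I \<one>" "y \<in> I \<one>" for x y using that unfolding I_def by (rule setmul_add)
    show "a * b \<in> I \<one>" if "a \<in> I \<one>" "b \<in> S \<one>" for a b using that I_ideal_right by blast
  qed
  finally show "S \<one> \<subseteq> I \<one>" .
qed

lemma e1_ident: "is_identity_of (eps G S \<one>) (S \<one>)"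
  using ident[of \<one>] S1_eq by simp

lemma eps_central_idem: "g \<in> carrier G \<Longrightarrow> central_idempotent (S \<one>) (eps G S g)"
  unfolding central_idempotent_def using eps_in eps_idem eps_central by blast

end

locale urg =
  fixes R :: "'a::ring set" and u :: 'a
  assumes ident: "is_identity_of u R"
    and zero: "0 \<in> R" and add: "x \<in> R \<Longrightarrow> y \<in> R \<Longrightarrow> x + y \<in> R"
    and neg: "x \<in> R \<Longrightarrow> - x \<in> R" and mult: "x \<in> R \<Longrightarrow> y \<in> R \<Longrightarrow> x * y \<in> R"
begin

lemma diff: "x \<in> R \<Longrightarrow> y \<in> R \<Longrightarrow> x - y \<in> R"
  unfolding diff_conv_add_uminus by (intro add neg)

lemma u_in: "u \<in> R" using ident unfolding is_identity_of_def by blast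
lemma u_left: "x \<in> R \<Longrightarrow> u * x = x" using ident unfolding is_identity_of_def by blast
lemma u_right: "x \<in> R \<Longrightarrow> x * u = x" using ident unfolding is_identity_of_def by blast

abbreviation CI where "CI c \<equiv> central_idempotent R c"

lemma CI_in: "CI c \<Longrightarrow> c \<in> R" unfolding central_idempotent_def by blast
lemma CI_idem: "CI c \<Longrightarrow> c * c = c" unfolding central_idempotent_def by blast
lemma CI_comm: "CI c \<Longrightarrow> x \<in> R \<Longrightarrow> c * x = x * c" unfolding central_idempotent_def by blast

lemma CI_u: "CI u" unfolding central_idempotent_def using u_in u_left u_right by simp

lemma CI_mult: assumes "CI a" "CI b" shows "CI (a * b)"
proof -
  have ab: "a * b = b * a" using assms CI_comm CI_in by blast
  have "a * b * (a * b) = a * (b * a) * b" by (simp add: mult.assoc)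
  also have "\<dots> = (a * a) * (b * b)" by (simp add: ab[symmetric] mult.assoc)
  also have "\<dots> = a * b" using assms CI_idem by simp
  finally have 1: "a * b * (a * b) = a * b" .
  have 2: "a * b * x = x * (a * b)" if "x \<in> R" for x
  proof -
    have "a * b * x = a * (x * b)" using CI_comm[OF assms(2) that] by (simp add: mult.assoc)
    also have "\<dots> = x * (a * b)" using CI_comm[OF assms(1) that] by (simp add: mult.assoc[symmetric])
    finally show ?thesis .
  qed
  show ?thesis unfolding central_idempotent_def using 1 2 mult CI_in assms by blast
qed

lemma CI_join: assumes "CI a" "CI b" shows "CI (a + b - a * b)"
proof -
  have ab: "a * b = b * a" using assms CI_comm CI_in by blast
  have aa: "a * a = a" and bb: "b * b = b" using assms CI_idem by auto
  have aab: "a * (a * b) = a * b" using aa by (simp add: mult.assoc[symmetric])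
  have bab: "b * (a * b) = a * b" using bb ab by (metis mult.assoc)
  have abab: "a * b * (a * b) = a * b" using CI_mult[OF assms] CI_idem by blast
  have "(a + b - a * b) * (a + b - a * b)
      = a * a + a * b - a * (a * b) + (b * a + b * b - b * (a * b)) - (a * b * a + a * b * b - a * b * (a * b))"
    by (simp add: algebra_simps)
  also have "\<dots> = a + b - a * b"
    using aa bb aab bab abab ab by (simp add: mult.assoc[symmetric]) (simp add: mult.assoc)
  finally have 1: "(a + b - a * b) * (a + b - a * b) = a + b - a * b" .
  have 2: "(a + b - a * b) * x = x * (a + b - a * b)" if "x \<in> R" for x
  proof -
    have "a * b * x = x * (a * b)" using CI_mult[OF assms] that CI_comm by blast
    thus ?thesis using CI_comm[OF assms(1) that] CI_comm[OF assms(2) that] by (simp add: algebra_simps)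
  qed
  have 3: "a + b - a * b \<in> R" using assms CI_in by (intro diff add mult)
  show ?thesis unfolding central_idempotent_def using 1 2 3 by blast
qed

end

context urg begin

lemma CI_split:
  assumes e: "CI e" and c: "central_primitive_idempotent R c"
  shows "e * c = 0 \<or> e * c = c"
proof -
  have cC: "CI c" using c unfolding central_primitive_idempotent_def by blast
  have ec: "e * c = c * e" using CI_comm[OF cC] CI_in[OF e] by simp
  have ee: "e * e = e" and cc: "c * c = c" using e cC CI_idem by auto
  have 1: "CI (e * c)" using CI_mult e cC by blast
  have 2: "CI (c - e * c)"
  proof -
    have in_: "c - e * c \<in> R" using CI_in e cC by (intro diff mult)
    have ecc: "e * c * c = e * c" using cc by (simp add: mult.assoc)
    have cec: "c * (e * c) = e * c" using ec cc by (metis mult.assoc)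
    have ecec: "e * c * (e * c) = e * c" using 1 CI_idem by blast
    have "(c - e * c) * (c - e * c) = c * c - c * (e * c) - (e * c * c - e * c * (e * c))"
      by (simp add: algebra_simps)
    also have "\<dots> = c - e * c" using cc ecc cec ecec by simp
    finally have idem: "(c - e * c) * (c - e * c) = c - e * c" .
    have cent: "(c - e * c) * x = x * (c - e * c)" if "x \<in> R" for x
      using CI_comm[OF cC that] CI_comm[OF 1 that] by (simp add: algebra_simps)
    show ?thesis unfolding central_idempotent_def using in_ idem cent by blast
  qed
  have o1: "e * c * (c - e * c) = 0"
  proof -
    have "e * c * (c - e * c) = e * c * c - e * c * (e * c)" by (simp add: algebra_simps)
    thus ?thesis using cc CI_idem[OF 1] by (simp add: mult.assoc)
  qed
  have o2: "(c - e * c) * (e * c) = 0"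
  proof -
    have "(c - e * c) * (e * c) = c * (e * c) - e * c * (e * c)" by (simp add: algebra_simps)
    moreover have "c * (e * c) = e * c" using ec cc by (metis mult.assoc)
    ultimately show ?thesis using CI_idem[OF 1] by simp
  qed
  have s: "c = e * c + (c - e * c)" by simp
  from c have "\<not> (e * c \<noteq> 0 \<and> c - e * c \<noteq> 0)"
    unfolding central_primitive_idempotent_def using 1 2 o1 o2 s by blast
  thus ?thesis by auto
qed

lemma bd_finite: assumes "block_decomposable R" shows "finite {c. CI c}"
proof -
  obtain r :: nat and c :: "nat \<Rightarrow> 'a" where cp: "\<forall>i<r. central_primitive_idempotent R (c i)" and id: "is_identity_of (\<Sum>i<r. c i) R"
    using assms unfolding block_decomposable_def by blast
  have usum: "u = (\<Sum>i<r. c i)" using identity_unique[OF ident id] .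
  have "{c. CI c} \<subseteq> (\<lambda>A. \<Sum>i\<in>A. c i) ` Pow {..<r}"
  proof
    fix e assume "e \<in> {c. CI c}"
    hence e: "CI e" by simp
    have "e = e * u" using u_right CI_in[OF e] by simp
    also have "\<dots> = (\<Sum>i<r. e * c i)" by (simp add: usum sum_distrib_left)
    also have "\<dots> = (\<Sum>i\<in>{i\<in>{..<r}. e * c i = c i}. c i)"
    proof -
      have "(\<Sum>i<r. e * c i) = (\<Sum>i\<in>{i\<in>{..<r}. e * c i = c i}. e * c i)"
        by (rule sum.mono_neutral_right) (use CI_split[OF e] cp in auto)
      thus ?thesis by simp
    qed
    finally show "e \<in> (\<lambda>A. \<Sum>i\<in>A. c i) ` Pow {..<r}" by blast
  qed
  thus ?thesis by (rule finite_subset) simp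
qed

definition bd where "bd f \<longleftrightarrow> (\<exists>(r::nat) c. (\<forall>i<r. central_primitive_idempotent R (c i)) \<and> (\<Sum>i<r. c i) = f)"

lemma bd_zero: "bd 0" unfolding bd_def by (rule exI[of _ 0]) simp

lemma bd_prim: "central_primitive_idempotent R c \<Longrightarrow> bd c"
  unfolding bd_def by (rule exI[of _ 1], rule exI[of _ "\<lambda>_. c"]) simp

lemma bd_add: assumes "bd a" "bd b" shows "bd (a + b)"
proof -
  obtain r1 :: nat and c1 :: "nat \<Rightarrow> 'a" where 1: "\<forall>i<r1. central_primitive_idempotent R (c1 i)" "(\<Sum>i<r1. c1 i) = a"
    using assms(1) unfolding bd_def by blast
  obtain r2 :: nat and c2 :: "nat \<Rightarrow> 'a" where 2: "\<forall>i<r2. central_primitive_idempotent R (c2 i)" "(\<Sum>i<r2. c2 i) = b"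
    using assms(2) unfolding bd_def by blast
  define c where "c i = (if i < r1 then c1 i else c2 (i - r1))" for i
  have "\<forall>k\<le>r2. (\<Sum>i<r1 + k. c i) = a + (\<Sum>i<k. c2 i)"
  proof (intro allI impI)
    fix k show "(\<Sum>i<r1 + k. c i) = a + (\<Sum>i<k. c2 i)"
    proof (induction k)
      case 0 thus ?case using 1 by (simp add: c_def)
    next
      case (Suc k) thus ?case by (simp add: c_def add.assoc)
    qed
  qed
  hence "(\<Sum>i<r1 + r2. c i) = a + b" using 2 by simp
  moreover have "\<forall>i<r1 + r2. central_primitive_idempotent R (c i)"
    using 1 2 by (auto simp: c_def)
  ultimately show ?thesis unfolding bd_def by blast
qed

lemma bd_step:
  assumes f: "CI f" and nb: "\<not> bd f"
  shows "\<exists>f'. CI f' \<and> \<not> bd f' \<and> f * f' = f' \<and> f' \<noteq> f"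
proof -
  have "f \<noteq> 0" using nb bd_zero by blast
  moreover have "\<not> central_primitive_idempotent R f" using nb bd_prim by blast
  ultimately obtain c1 c2 where c: "CI c1" "CI c2" "c1 \<noteq> 0" "c2 \<noteq> 0" "c1 * c2 = 0" "c2 * c1 = 0" "f = c1 + c2"
    using f unfolding central_primitive_idempotent_def by blast
  have "\<not> bd c1 \<or> \<not> bd c2" using nb bd_add c(7) by blast
  thus ?thesis
  proof
    assume "\<not> bd c1"
    moreover have "f * c1 = c1" using c CI_idem by (simp add: distrib_right)
    moreover have "c1 \<noteq> f" using c by auto
    ultimately show ?thesis using c by blast
  next
    assume "\<not> bd c2"
    moreover have "f * c2 = c2" using c CI_idem by (simp add: distrib_right)
    moreover have "c2 \<noteq> f" using c by auto
    ultimately show ?thesis using c by blast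
  qed
qed

lemma noeth_bd:
  assumes "left_noetherian R \<or> right_noetherian R"
  shows "block_decomposable R"
proof (rule ccontr)
  assume nbd: "\<not> block_decomposable R"
  have nbu: "\<not> bd u"
  proof
    assume "bd u"
    then obtain r :: nat and c :: "nat \<Rightarrow> 'a" where "\<forall>i<r. central_primitive_idempotent R (c i)" "(\<Sum>i<r. c i) = u"
      unfolding bd_def by blast
    thus False using nbd ident unfolding block_decomposable_def by auto
  qed
  define P where "P f f' \<longleftrightarrow> CI f' \<and> \<not> bd f' \<and> f * f' = f' \<and> f' \<noteq> f" for f f'
  define fs where "fs = rec_nat u (\<lambda>_ f. SOME f'. P f f')"
  have fs0: "fs 0 = u" and fsS: "fs (Suc n) = (SOME f'. P (fs n) f')" for n by (simp_all add: fs_def)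
  have inv: "CI (fs n) \<and> \<not> bd (fs n)" for n
  proof (induction n)
    case 0 thus ?case using fs0 CI_u nbu by simp
  next
    case (Suc n)
    have "\<exists>f'. P (fs n) f'" using bd_step Suc unfolding P_def by blast
    hence "P (fs n) (fs (Suc n))" unfolding fsS by (rule someI_ex)
    thus ?case unfolding P_def by blast
  qed
  have Pn: "P (fs n) (fs (Suc n))" for n
  proof -
    have "\<exists>f'. P (fs n) f'" using bd_step inv unfolding P_def by blast
    thus ?thesis unfolding fsS by (rule someI_ex)
  qed
  define L where "L n = {x - x * fs n | x. x \<in> R}" for n
  have fsR: "fs n \<in> R" for n using inv CI_in by blast
  have LR: "L n \<subseteq> R" for n
  proof
    fix x assume "x \<in> L n"
    then obtain a where "a \<in> R" "x = a - a * fs n" unfolding L_def by blast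
    thus "x \<in> R" using fsR[of n] by (simp add: diff mult)
  qed
  have L0: "0 \<in> L n" for n
  proof -
    have "(0::'a) = 0 - 0 * fs n" by simp
    thus ?thesis unfolding L_def using zero by blast
  qed
  have Lmem: "z \<in> L n" if "a \<in> R" "z = a - a * fs n" for a z n
    unfolding L_def using that by blast
  have Ladd: "x + y \<in> L n" if h: "x \<in> L n" "y \<in> L n" for x y n
  proof -
    obtain a b where ab: "a \<in> R" "b \<in> R" "x = a - a * fs n" "y = b - b * fs n" using h unfolding L_def by blast
    have "x + y = (a + b) - (a + b) * fs n" unfolding ab(3,4) by (simp add: algebra_simps)
    thus ?thesis using add[OF ab(1,2)] Lmem by blast
  qed
  have Lneg: "- x \<in> L n" if h: "x \<in> L n" for x n
  proof -
    obtain a where a: "a \<in> R" "x = a - a * fs n" using h unfolding L_def by blast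
    have "- x = (- a) - (- a) * fs n" unfolding a(2) by (simp add: algebra_simps)
    thus ?thesis using neg[OF a(1)] Lmem by blast
  qed
  have Lleft: "r * x \<in> L n" if h: "r \<in> R" "x \<in> L n" for r x n
  proof -
    obtain a where a: "a \<in> R" "x = a - a * fs n" using h unfolding L_def by blast
    have "r * x = r * a - (r * a) * fs n" unfolding a(2) by (simp add: algebra_simps)
    thus ?thesis using mult[OF h(1) a(1)] Lmem by blast
  qed
  have Lright: "x * r \<in> L n" if h: "r \<in> R" "x \<in> L n" for r x n
  proof -
    obtain a where a: "a \<in> R" "x = a - a * fs n" using h unfolding L_def by blast
    have "x * r = a * r - a * (fs n * r)" unfolding a(2) by (simp add: algebra_simps)
    also have "\<dots> = a * r - (a * r) * fs n" using CI_comm[of "fs n" r] inv h(1) by (simp add: mult.assoc)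
    finally show ?thesis using mult[OF a(1) h(1)] Lmem by blast
  qed
  have Lmono: "L n \<subseteq> L (Suc n)" for n
  proof
    fix x assume "x \<in> L n"
    then obtain a where a: "a \<in> R" "x = a - a * fs n" unfolding L_def by blast
    let ?y = "a - a * fs n"
    have fg: "fs n * fs (Suc n) = fs (Suc n)" using Pn unfolding P_def by blast
    have "?y - ?y * fs (Suc n) = a - a * fs n - a * fs (Suc n) + a * (fs n * fs (Suc n))"
      by (simp add: algebra_simps)
    also have "\<dots> = ?y" using fg by simp
    finally have "x = ?y - ?y * fs (Suc n)" using a by simp
    moreover have "?y \<in> R" using a fsR by (intro diff mult)
    ultimately show "x \<in> L (Suc n)" unfolding L_def by blast
  qed
  have li: "left_ideal_of R (L n)" for n
    unfolding left_ideal_of_def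
    by (intro conjI ballI) (simp_all add: LR L0 Ladd Lneg Lleft)
  have ri: "right_ideal_of R (L n)" for n
    unfolding right_ideal_of_def
    by (intro conjI ballI) (simp_all add: LR L0 Ladd Lneg Lright)
  have c1: "(\<forall>n. left_ideal_of R (L n)) \<and> (\<forall>n. L n \<subseteq> L (Suc n))" using li Lmono by simp
  have c2: "(\<forall>n. right_ideal_of R (L n)) \<and> (\<forall>n. L n \<subseteq> L (Suc n))" using ri Lmono by simp
  have "\<exists>m. \<forall>n\<ge>m. L n = L m"
    using assms
  proof
    assume "left_noetherian R"
    from this[unfolded left_noetherian_def, rule_format, OF c1] show ?thesis .
  next
    assume "right_noetherian R"
    from this[unfolded right_noetherian_def, rule_format, OF c2] show ?thesis .
  qed
  then obtain m where m: "\<forall>n\<ge>m. L n = L m" by blast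
  have eq: "L (Suc m) = L m" using m[rule_format, of "Suc m"] by linarith
  let ?f = "fs m" and ?g = "fs (Suc m)"
  have fg: "?f * ?g = ?g" and ne: "?g \<noteq> ?f" using Pn unfolding P_def by blast+
  have gf: "?g * ?f = ?g" using fg CI_comm[of ?f ?g] inv fsR by simp
  have "u - u * ?g \<in> L (Suc m)" unfolding L_def using u_in by blast
  then obtain x where x: "x \<in> R" "u - u * ?g = x - x * ?f" using eq unfolding L_def by blast
  have "(u - u * ?g) * ?f = ?f - ?g" using u_left fsR gf by (simp add: algebra_simps)
  moreover have "(x - x * ?f) * ?f = 0" using CI_idem[of ?f] inv by (simp add: algebra_simps mult.assoc)
  ultimately have "?f - ?g = 0" using x by simp
  thus False using ne by simp
qed

end

context egr begin

lemma urg1: "urg (S \<one>) (eps G S \<one>)"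
proof (unfold_locales)
  fix x y assume "x \<in> S \<one>" "y \<in> S \<one>"
  thus "x * y \<in> S \<one>" using S_mult[of \<one> \<one> x y] by simp
qed (auto simp: e1_ident S_zero S_add S_neg)

lemma J_CI: "x \<in> join_closure X \<Longrightarrow> X \<subseteq> eps G S ` carrier G \<Longrightarrow> central_idempotent (S \<one>) x"
proof (induction rule: join_closure.induct)
  case (base x) thus ?case using eps_central_idem by blast
next
  case (join a b) thus ?case using urg.CI_join[OF urg1] by blast
qed

lemma ef_if_finite: "finite {c. central_idempotent (S \<one>) c} \<Longrightarrow> epsilon_finite G S"
proof -
  assume f: "finite {c. central_idempotent (S \<one>) c}"
  have "join_closure (eps G S ` carrier G) \<subseteq> {c. central_idempotent (S \<one>) c}"
    using J_CI by blast
  thus ?thesis unfolding epsilon_finite_def using es finite_subset[OF _ f] by blast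
qed

lemma part_a: "block_decomposable (S \<one>) \<Longrightarrow> epsilon_finite G S"
  using ef_if_finite urg.bd_finite[OF urg1] by blast

lemma part_b: "left_noetherian (S \<one>) \<or> right_noetherian (S \<one>) \<Longrightarrow> epsilon_finite G S"
  using part_a urg.noeth_bd[OF urg1] by blast

end

locale qgr = egr G S for G :: "('g,'m) monoid_scheme" (structure) and S :: "'g \<Rightarrow> 'a::ring set" +
  fixes N :: "'g set"
  assumes nN: "N \<lhd> G"
begin

abbreviation H where "H \<equiv> G Mod N"
abbreviation T where "T \<equiv> induced_grading S"

lemma sgN: "subgroup N G" using nN unfolding normal_def by blast
lemma grpH: "group H" using nN normal.factorgroup_is_group by blast

lemma cos_rep: "C \<in> carrier H \<Longrightarrow> \<exists>a\<in>carrier G. C = N #> a"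
  by (auto simp: FactGroup_def RCOSETS_def)

lemma cos_sub: "C \<in> carrier H \<Longrightarrow> C \<subseteq> carrier G"
  using cos_rep r_coset_subset_G subgroup.subset[OF sgN] by blast

lemma cos_elem: assumes "C \<in> carrier H" "g \<in> C" shows "C = N #> g"
proof -
  obtain a where a: "a \<in> carrier G" "C = N #> a" using cos_rep assms(1) by blast
  show ?thesis using repr_independence[of g N a] a assms sgN by simp
qed

lemma cos_disj: "C \<in> carrier H \<Longrightarrow> D \<in> carrier H \<Longrightarrow> g \<in> C \<Longrightarrow> g \<in> D \<Longrightarrow> C = D"
  using cos_elem by metis

lemma cos_self: "g \<in> carrier G \<Longrightarrow> g \<in> N #> g" using rcos_self sgN by blast

lemma cos_in: "g \<in> carrier G \<Longrightarrow> N #> g \<in> carrier H"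
  using rcosetsI subgroup.subset[OF sgN] by (simp add: FactGroup_def)

lemma cos_ne: "C \<in> carrier H \<Longrightarrow> C \<noteq> {}"
  using cos_rep cos_self by blast

lemma cos_mult: "g \<in> C \<Longrightarrow> h \<in> D \<Longrightarrow> g \<otimes> h \<in> C \<otimes>\<^bsub>H\<^esub> D"
  by (auto simp: set_mult_def)

lemma cos_inv: assumes "C \<in> carrier H" shows "h \<in> inv\<^bsub>H\<^esub> C \<longleftrightarrow> h \<in> carrier G \<and> inv h \<in> C"
proof -
  have "inv\<^bsub>H\<^esub> C = set_inv C" using normal.inv_FactGroup[OF nN assms] .
  thus ?thesis using cos_sub[OF assms] by (auto simp: SET_INV_def intro!: bexI[of _ "inv h"])
qed

lemma one_in_N: "\<one> \<in> N" by (rule subgroup.one_closed[OF sgN])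

lemma Hmult_closed: "C \<in> carrier H \<Longrightarrow> D \<in> carrier H \<Longrightarrow> C \<otimes>\<^bsub>H\<^esub> D \<in> carrier H"
  by (rule monoid.m_closed[OF group.is_monoid[OF grpH]])
lemma Hinv_closed: "C \<in> carrier H \<Longrightarrow> inv\<^bsub>H\<^esub> C \<in> carrier H"
  by (rule group.inv_closed[OF grpH])
lemma Hone: "\<one>\<^bsub>H\<^esub> = N" by simp
lemma N_in: "N \<in> carrier H" using monoid.one_closed[OF group.is_monoid[OF grpH]] by simp

lemma T_memI: "finite F \<Longrightarrow> F \<subseteq> C \<Longrightarrow> (\<forall>g\<in>F. f g \<in> S g) \<Longrightarrow> x = sum f F \<Longrightarrow> x \<in> T C"
  unfolding induced_grading_def by blast

lemma T_memE: assumes "x \<in> T C"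
  obtains F f where "finite F" "F \<subseteq> C" "\<forall>g\<in>F. f g \<in> S g" "x = sum f F"
  using assms unfolding induced_grading_def by blast

lemma T_zero: "0 \<in> T C" by (rule T_memI[of "{}"]) auto

lemma S_T: "g \<in> C \<Longrightarrow> x \<in> S g \<Longrightarrow> x \<in> T C"
  by (rule T_memI[of "{g}" _ "\<lambda>_. x"]) auto

lemma T_add: assumes C: "C \<subseteq> carrier G" and x: "x \<in> T C" and y: "y \<in> T C" shows "x + y \<in> T C"
proof -
  obtain F1 f1 where 1: "finite F1" "F1 \<subseteq> C" "\<forall>g\<in>F1. f1 g \<in> S g" "x = sum f1 F1" using x by (rule T_memE)
  obtain F2 f2 where 2: "finite F2" "F2 \<subseteq> C" "\<forall>g\<in>F2. f2 g \<in> S g" "y = sum f2 F2" using y by (rule T_memE)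
  define f where "f g = (if g \<in> F1 then f1 g else 0) + (if g \<in> F2 then f2 g else 0)" for g
  have fin: "finite (F1 \<union> F2)" using 1 2 by simp
  have "sum f (F1 \<union> F2) = sum f1 ((F1 \<union> F2) \<inter> F1) + sum f2 ((F1 \<union> F2) \<inter> F2)"
    unfolding f_def sum.distrib sum.inter_restrict[OF fin] by simp
  also have "\<dots> = x + y" using 1 2 by (simp add: Int_absorb1)
  finally have s: "x + y = sum f (F1 \<union> F2)" by simp
  have "\<forall>g\<in>F1 \<union> F2. f g \<in> S g"
  proof
    fix g assume g: "g \<in> F1 \<union> F2"
    hence gc: "g \<in> carrier G" using 1 2 C by blast
    show "f g \<in> S g" unfolding f_def using 1 2 g by (auto intro!: S_add S_zero gc)
  qed
  thus ?thesis using 1 2 s by (intro T_memI[of "F1 \<union> F2"]) auto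
qed

lemma T_neg: assumes C: "C \<subseteq> carrier G" and x: "x \<in> T C" shows "- x \<in> T C"
proof -
  obtain F f where 1: "finite F" "F \<subseteq> C" "\<forall>g\<in>F. f g \<in> S g" "x = sum f F" using x by (rule T_memE)
  have "- x = sum (\<lambda>g. - f g) F" using 1 by (simp add: sum_negf)
  moreover have "\<forall>g\<in>F. - f g \<in> S g" using 1 C S_neg by blast
  ultimately show ?thesis using 1 by (intro T_memI[of F]) auto
qed

lemma T_sum: assumes C: "C \<subseteq> carrier G" "finite A" "\<And>i. i \<in> A \<Longrightarrow> h i \<in> T C" shows "sum h A \<in> T C"
  using assms(2,3)
proof (induction A rule: finite_induct)
  case empty thus ?case by (simp add: T_zero)
next
  case (insert a A) thus ?case using T_add[OF C(1)] by simp
qed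

lemma T_mult: assumes C: "C \<in> carrier H" and D: "D \<in> carrier H" and x: "x \<in> T C" and y: "y \<in> T D"
  shows "x * y \<in> T (C \<otimes>\<^bsub>H\<^esub> D)"
proof -
  obtain F1 f1 where 1: "finite F1" "F1 \<subseteq> C" "\<forall>g\<in>F1. f1 g \<in> S g" "x = sum f1 F1" using x by (rule T_memE)
  obtain F2 f2 where 2: "finite F2" "F2 \<subseteq> D" "\<forall>g\<in>F2. f2 g \<in> S g" "y = sum f2 F2" using y by (rule T_memE)
  have CD: "C \<otimes>\<^bsub>H\<^esub> D \<subseteq> carrier G" using cos_sub Hmult_closed C D by blast
  have "x * y = (\<Sum>g\<in>F1. \<Sum>h\<in>F2. f1 g * f2 h)" using 1 2 by (simp add: sum_product)
  also have "\<dots> \<in> T (C \<otimes>\<^bsub>H\<^esub> D)"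
  proof (intro T_sum CD 1 2)
    fix g h assume g: "g \<in> F1" and h: "h \<in> F2"
    have gc: "g \<in> carrier G" "h \<in> carrier G" using g h 1 2 cos_sub C D by blast+
    have "f1 g * f2 h \<in> S (g \<otimes> h)" using S_mult[OF gc] 1 2 g h by blast
    moreover have "g \<otimes> h \<in> C \<otimes>\<^bsub>H\<^esub> D" using cos_mult g h 1 2 by blast
    ultimately show "f1 g * f2 h \<in> T (C \<otimes>\<^bsub>H\<^esub> D)" using S_T by blast
  qed
  finally show ?thesis .
qed

end

context qgr begin

lemma T_decomp: "\<exists>F f. finite F \<and> F \<subseteq> carrier H \<and> (\<forall>C\<in>F. f C \<in> T C) \<and> x = sum f F"
proof -
  obtain F f where F: "finite F" "F \<subseteq> carrier G" "\<forall>g\<in>F. f g \<in> S g" "x = sum f F"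
    using S_decomp[of x] by (elim exE conjE) blast
  let ?p = "\<lambda>g. N #> g"
  have "x = (\<Sum>C\<in>?p ` F. sum f {g \<in> F. ?p g = C})"
    using F(4) sum.image_gen[OF F(1), of f ?p] by simp
  moreover have "?p ` F \<subseteq> carrier H" using F(2) cos_in by blast
  moreover have "\<forall>C\<in>?p ` F. sum f {g \<in> F. ?p g = C} \<in> T C"
  proof
    fix C assume "C \<in> ?p ` F"
    show "sum f {g \<in> F. ?p g = C} \<in> T C"
    proof (rule T_memI[of "{g \<in> F. ?p g = C}"])
      show "finite {g \<in> F. ?p g = C}" using F(1) by simp
      show "{g \<in> F. ?p g = C} \<subseteq> C" using F(2) cos_self by blast
    qed (use F(3) in auto)
  qed
  ultimately show ?thesis using F(1)
    by (intro exI[of _ "?p ` F"] exI[of _ "\<lambda>C. sum f {g \<in> F. ?p g = C}"]) simp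
qed

lemma T_indep:
  assumes fin: "finite F" and FH: "F \<subseteq> carrier H" and ph: "\<forall>C\<in>F. \<phi> C \<in> T C" and s0: "sum \<phi> F = 0"
    and CF: "C \<in> F"
  shows "\<phi> C = 0"
proof -
  have "\<forall>C\<in>F. \<exists>Kk. finite (fst Kk) \<and> fst Kk \<subseteq> C \<and> (\<forall>g\<in>fst Kk. snd Kk g \<in> S g) \<and> \<phi> C = sum (snd Kk) (fst Kk)"
  proof
    fix C assume "C \<in> F"
    hence "\<phi> C \<in> T C" using ph by blast
    then obtain K k where "finite K" "K \<subseteq> C" "\<forall>g\<in>K. k g \<in> S g" "\<phi> C = sum k K"
      by (rule T_memE)
    thus "\<exists>Kk. finite (fst Kk) \<and> fst Kk \<subseteq> C \<and> (\<forall>g\<in>fst Kk. snd Kk g \<in> S g) \<and> \<phi> C = sum (snd Kk) (fst Kk)"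
      by (intro exI[of _ "(K, k)"]) simp
  qed
  then obtain Kk where Kk: "\<forall>C\<in>F. finite (fst (Kk C)) \<and> fst (Kk C) \<subseteq> C \<and> (\<forall>g\<in>fst (Kk C). snd (Kk C) g \<in> S g)
      \<and> \<phi> C = sum (snd (Kk C)) (fst (Kk C))"
    by (rule bchoice[elim_format]) blast
  define K where "K C = fst (Kk C)" for C
  define k where "k C = snd (Kk C)" for C
  have K1: "finite (K C)" "K C \<subseteq> C" "\<forall>g\<in>K C. k C g \<in> S g" "\<phi> C = sum (k C) (K C)" if "C \<in> F" for C
    using Kk that unfolding K_def k_def by blast+
  define \<psi> where "\<psi> g = k (N #> g) g" for g
  have Ccar: "C \<in> carrier H" if "C \<in> F" for C using that FH by blast
  have Kcos: "N #> g = C" if "C \<in> F" "g \<in> K C" for C g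
    using cos_elem[OF Ccar[OF that(1)]] K1(2)[OF that(1)] that(2) by blast
  have sumK: "sum \<psi> (K C) = \<phi> C" if "C \<in> F" for C
    using K1(4)[OF that] Kcos[OF that] unfolding \<psi>_def by (simp cong: sum.cong)
  have disj: "\<forall>C\<in>F. \<forall>D\<in>F. C \<noteq> D \<longrightarrow> K C \<inter> K D = {}"
  proof (intro ballI impI)
    fix C D assume "C \<in> F" "D \<in> F" "C \<noteq> D"
    thus "K C \<inter> K D = {}" using Kcos by blast
  qed
  have "sum \<psi> (\<Union>C\<in>F. K C) = (\<Sum>C\<in>F. sum \<psi> (K C))"
    by (rule sum.UNION_disjoint) (use fin K1(1) disj in auto)
  also have "\<dots> = sum \<phi> F" using sumK by simp
  finally have s: "sum \<psi> (\<Union>C\<in>F. K C) = 0" using s0 by simp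
  have UK: "(\<Union>C\<in>F. K C) \<subseteq> carrier G" using K1(2) Ccar cos_sub by blast
  have psiS: "\<forall>g\<in>(\<Union>C\<in>F. K C). \<psi> g \<in> S g"
  proof
    fix g assume "g \<in> (\<Union>C\<in>F. K C)"
    then obtain C where C: "C \<in> F" "g \<in> K C" by blast
    have "\<psi> g = k C g" unfolding \<psi>_def using Kcos[OF C] by simp
    thus "\<psi> g \<in> S g" using K1(3)[OF C(1)] C(2) by simp
  qed
  have finU: "finite (\<Union>C\<in>F. K C)" by (rule finite_UN_I[OF fin K1(1)])
  have z: "\<psi> g = 0" if "g \<in> (\<Union>C\<in>F. K C)" for g
    using S_indep[OF finU UK psiS s that] .
  have "sum \<psi> (K C) = 0"
  proof (rule sum.neutral, rule ballI)
    fix g assume "g \<in> K C" thus "\<psi> g = 0" using CF by (intro z) blast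
  qed
  thus ?thesis using sumK CF by simp
qed

lemma graded_H: "graded_ring H T"
  unfolding graded_ring_def
proof (intro conjI ballI allI impI)
  show "group H" by (rule grpH)
  fix C assume C: "C \<in> carrier H"
  show "0 \<in> T C" by (rule T_zero)
  fix x y assume "x \<in> T C" "y \<in> T C"
  thus "x + y \<in> T C" "- x \<in> T C" using T_add T_neg cos_sub[OF C] by blast+
next
  fix C D x y assume "C \<in> carrier H" "D \<in> carrier H" "x \<in> T C" "y \<in> T D"
  thus "x * y \<in> T (C \<otimes>\<^bsub>H\<^esub> D)" by (rule T_mult)
next
  fix x show "\<exists>F f. finite F \<and> F \<subseteq> carrier H \<and> (\<forall>C\<in>F. f C \<in> T C) \<and> x = sum f F" by (rule T_decomp)
next
  fix F f C assume "finite F \<and> F \<subseteq> carrier H \<and> (\<forall>C\<in>F. f C \<in> T C) \<and> sum f F = 0" "C \<in> F"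
  thus "f C = 0" using T_indep by blast
qed

end

lemma join_closure_mono: "X \<subseteq> Y \<Longrightarrow> join_closure X \<subseteq> join_closure Y"
proof
  fix x assume "X \<subseteq> Y" "x \<in> join_closure X"
  thus "x \<in> join_closure Y"
    by (induction rule: join_closure.induct[OF \<open>x \<in> join_closure X\<close>]) (auto intro: join_closure.intros)
qed

context urg begin

lemma upper_bound:
  assumes KCI: "\<And>a. a \<in> K \<Longrightarrow> CI a" and Kj: "\<And>a b. a \<in> K \<Longrightarrow> b \<in> K \<Longrightarrow> a + b - a * b \<in> K"
    and A: "finite A" "A \<noteq> {}" "A \<subseteq> K"
  shows "\<exists>u\<in>K. \<forall>v\<in>A. v * u = v"
  using A
proof (induction A rule: finite_ne_induct)
  case (singleton a)
  thus ?case using KCI CI_idem by blast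
next
  case (insert a A)
  then obtain w where w: "w \<in> K" "\<forall>v\<in>A. v * w = v" by blast
  have a: "a \<in> K" using insert by blast
  let ?u = "a + w - a * w"
  have uK: "?u \<in> K" using Kj a w(1) by blast
  have aCI: "CI a" and wCI: "CI w" using KCI a w(1) by blast+
  have aw: "a * w = w * a" using CI_comm[OF aCI CI_in[OF wCI]] .
  have "a * ?u = a" 
  proof -
    have "a * ?u = a * a + a * w - a * a * w" by (simp add: algebra_simps mult.assoc)
    thus ?thesis using CI_idem[OF aCI] by simp
  qed
  moreover have "v * ?u = v" if v: "v \<in> A" for v
  proof -
    have vw: "v * w = v" using w v by blast
    have "v * ?u = v * a + v * w - v * a * w" by (simp add: algebra_simps mult.assoc)
    also have "v * a * w = v * w * a" using aw by (simp add: mult.assoc)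
    finally show ?thesis using vw by simp
  qed
  ultimately show ?case using uK by blast
qed

end

context qgr begin

lemma setmul_T: assumes "C \<in> carrier H" "D \<in> carrier H"
  shows "setmul (T C) (T D) \<subseteq> T (C \<otimes>\<^bsub>H\<^esub> D)"
proof (rule setmul_subset)
  have CD: "C \<otimes>\<^bsub>H\<^esub> D \<subseteq> carrier G" using cos_sub Hmult_closed assms by blast
  show "0 \<in> T (C \<otimes>\<^bsub>H\<^esub> D)" by (rule T_zero)
  show "x + y \<in> T (C \<otimes>\<^bsub>H\<^esub> D)" if "x \<in> T (C \<otimes>\<^bsub>H\<^esub> D)" "y \<in> T (C \<otimes>\<^bsub>H\<^esub> D)" for x y
    using T_add[OF CD that] .
  show "a * b \<in> T (C \<otimes>\<^bsub>H\<^esub> D)" if "a \<in> T C" "b \<in> T D" for a b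
    using T_mult[OF assms that] .
qed

lemma triple: assumes "C \<in> carrier H" shows "(C \<otimes>\<^bsub>H\<^esub> inv\<^bsub>H\<^esub> C) \<otimes>\<^bsub>H\<^esub> C = C"
  using group.r_inv[OF grpH assms] monoid.l_one[OF group.is_monoid[OF grpH] assms] by simp

lemma strong_H: assumes C: "C \<in> carrier H"
  shows "setmul (setmul (T C) (T (inv\<^bsub>H\<^esub> C))) (T C) = T C"
proof
  let ?C' = "inv\<^bsub>H\<^esub> C"
  have C': "?C' \<in> carrier H" using Hinv_closed[OF C] .
  have CC': "C \<otimes>\<^bsub>H\<^esub> ?C' \<in> carrier H" using Hmult_closed[OF C C'] .
  have "setmul (setmul (T C) (T ?C')) (T C) \<subseteq> setmul (T (C \<otimes>\<^bsub>H\<^esub> ?C')) (T C)"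
    using setmul_T[OF C C'] by (rule setmul_mono) simp
  also have "\<dots> \<subseteq> T ((C \<otimes>\<^bsub>H\<^esub> ?C') \<otimes>\<^bsub>H\<^esub> C)" using setmul_T[OF CC' C] .
  finally show "setmul (setmul (T C) (T ?C')) (T C) \<subseteq> T C" using triple[OF C] by simp
next
  let ?C' = "inv\<^bsub>H\<^esub> C"
  let ?M = "setmul (setmul (T C) (T ?C')) (T C)"
  show "T C \<subseteq> ?M"
  proof
    fix x assume "x \<in> T C"
    then obtain F f where F: "finite F" "F \<subseteq> C" "\<forall>g\<in>F. f g \<in> S g" "x = sum f F" by (rule T_memE)
    have "f g \<in> ?M" if g: "g \<in> F" for g
    proof -
      have gC: "g \<in> C" and gc: "g \<in> carrier G" using g F(2) cos_sub[OF C] by blast+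
      have "f g \<in> setmul (I g) (S g)" using strong[OF gc] F(3) g by blast
      moreover have "setmul (I g) (S g) \<subseteq> ?M" unfolding I_def
      proof (intro setmul_mono)
        show "S g \<subseteq> T C" using S_T[OF gC] by blast
        show "S (inv g) \<subseteq> T ?C'"
        proof
          fix y assume "y \<in> S (inv g)"
          moreover have "inv g \<in> ?C'" using cos_inv[OF C] gC gc by simp
          ultimately show "y \<in> T ?C'" using S_T by blast
        qed
      qed (use S_T[OF gC] in blast)
      ultimately show ?thesis by blast
    qed
    thus "x \<in> ?M" using F(1,4) setmul_sum by metis
  qed
qed

end

context qgr begin

lemma ident_H:
  assumes ef: "epsilon_finite G S" and C: "C \<in> carrier H"
  shows "\<exists>u. is_identity_of u (setmul (T C) (T (inv\<^bsub>H\<^esub> C)))"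
proof -
  let ?C' = "inv\<^bsub>H\<^esub> C"
  let ?M = "setmul (T C) (T ?C')"
  let ?E = "eps G S ` C"
  let ?K = "join_closure ?E"
  have Csub: "C \<subseteq> carrier G" using cos_sub[OF C] .
  have C': "?C' \<in> carrier H" using Hinv_closed[OF C] .
  have C'sub: "?C' \<subseteq> carrier G" using cos_sub[OF C'] .
  have EJ: "?E \<subseteq> eps G S ` carrier G" using Csub by blast
  have Kfin: "finite ?K"
    using ef join_closure_mono[OF EJ] unfolding epsilon_finite_def by (blast intro: finite_subset)
  have KCI: "central_idempotent (S \<one>) a" if "a \<in> ?K" for a using J_CI[OF that EJ] .
  have Kj: "a + b - a * b \<in> ?K" if "a \<in> ?K" "b \<in> ?K" for a b using join_closure.join[OF that] .
  have Kne: "?K \<noteq> {}" using cos_ne[OF C] join_closure.base by blast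
  obtain u where uK: "u \<in> ?K" and ub: "\<forall>v\<in>?K. v * u = v"
    using urg.upper_bound[OF urg1, of ?K ?K] KCI Kj Kfin Kne by blast
  have uCI: "central_idempotent (S \<one>) u" using KCI uK .
  have u1: "u \<in> S \<one>" using uCI unfolding central_idempotent_def by blast
  have epsu: "u * eps G S g = eps G S g" if "g \<in> C" for g
  proof -
    have gc: "g \<in> carrier G" using that Csub by blast
    have "eps G S g * u = eps G S g" using ub join_closure.base[of "eps G S g" ?E] that by blast
    moreover have "eps G S g * u = u * eps G S g" using eps_central[OF gc u1] .
    ultimately show ?thesis by simp
  qed
  have TC'1: "y * b \<in> T ?C'" if "y \<in> T ?C'" "b \<in> S \<one>" for y b
  proof -
    have "b \<in> T N" using S_T[OF one_in_N that(2)] .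
    hence "y * b \<in> T (?C' \<otimes>\<^bsub>H\<^esub> N)" using T_mult[OF C' N_in that(1)] by blast
    moreover have "?C' \<otimes>\<^bsub>H\<^esub> N = ?C'" using monoid.r_one[OF group.is_monoid[OF grpH] C'] by simp
    ultimately show ?thesis by simp
  qed
  have KM: "a \<in> ?M" if "a \<in> ?K" for a
    using that
  proof (induction rule: join_closure.induct)
    case (base x)
    then obtain g where g: "g \<in> C" "x = eps G S g" by blast
    have gc: "g \<in> carrier G" using g Csub by blast
    have "x \<in> I g" using eps_in_I[OF gc] g by simp
    moreover have "I g \<subseteq> ?M" unfolding I_def
    proof (rule setmul_mono)
      show "S g \<subseteq> T C" using S_T[OF g(1)] by blast
      have "inv g \<in> ?C'" using cos_inv[OF C] g gc by simp
      thus "S (inv g) \<subseteq> T ?C'" using S_T by blast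
    qed
    ultimately show ?case by blast
  next
    case (join a b)
    have b1: "b \<in> S \<one>" using KCI[OF join.hyps(2)] unfolding central_idempotent_def by blast
    have ab: "a * b \<in> ?M" using join.IH(1) by (rule setmul_right_mult) (rule TC'1[OF _ b1])
    have "- (a * b) \<in> ?M" using ab by (rule setmul_neg) (rule T_neg[OF Csub])
    hence "a + b + - (a * b) \<in> ?M" using join.IH setmul_add by blast
    thus ?case unfolding diff_conv_add_uminus .
  qed
  have left: "u * a = a" if ha: "a \<in> T C" for a
  proof -
    obtain F f where F: "finite F" "F \<subseteq> C" "\<forall>g\<in>F. f g \<in> S g" "a = sum f F" using ha by (rule T_memE)
    have "u * f g = f g" if g: "g \<in> F" for g
    proof -
      have gC: "g \<in> C" and gc: "g \<in> carrier G" using g F(2) Csub by blast+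
      have "f g = eps G S g * f g" using eps_left[OF gc] F(3) g by simp
      hence "u * f g = (u * eps G S g) * f g" by (metis mult.assoc)
      also have "\<dots> = f g" using epsu[OF gC] eps_left[OF gc] F(3) g by simp
      finally show ?thesis .
    qed
    thus ?thesis using F(4) by (simp add: sum_distrib_left)
  qed
  have right: "b * u = b" if hb: "b \<in> T ?C'" for b
  proof -
    obtain F f where F: "finite F" "F \<subseteq> ?C'" "\<forall>h\<in>F. f h \<in> S h" "b = sum f F" using hb by (rule T_memE)
    have "f h * u = f h" if h: "h \<in> F" for h
    proof -
      have hc: "h \<in> carrier G" and ih: "inv h \<in> C" using h F(2) cos_inv[OF C] by blast+
      have e: "f h = f h * eps G S (inv h)" using eps_right[OF hc] F(3) h by simp
      have eu: "eps G S (inv h) * u = eps G S (inv h)"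
        using ub join_closure.base[of "eps G S (inv h)" ?E] ih by blast
      have "f h * u = f h * (eps G S (inv h) * u)" using e by (metis mult.assoc)
      also have "\<dots> = f h * eps G S (inv h)" using eu by simp
      also have "\<dots> = f h" using e[symmetric] by simp
      finally show ?thesis .
    qed
    thus ?thesis using F(4) by (simp add: sum_distrib_right)
  qed
  have "is_identity_of u ?M"
    unfolding is_identity_of_def
  proof (intro conjI ballI)
    show "u \<in> ?M" using KM[OF uK] .
    fix x assume "x \<in> ?M"
    show "u * x = x" using \<open>x \<in> ?M\<close> by (rule setmul_left_id) (rule left)
    show "x * u = x" using \<open>x \<in> ?M\<close> by (rule setmul_right_id) (rule right)
  qed
  thus ?thesis by blast
qed

lemma eps_strong_H: "epsilon_finite G S \<Longrightarrow> epsilon_strong H T"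
  unfolding epsilon_strong_def
proof (intro conjI ballI graded_H)
  fix C assume "epsilon_finite G S" "C \<in> carrier H"
  thus "setmul (setmul (T C) (T (inv\<^bsub>H\<^esub> C))) (T C) = T C"
    "\<exists>u. is_identity_of u (setmul (T C) (T (inv\<^bsub>H\<^esub> C)))"
    using strong_H ident_H by blast+
qed

end

theorem theorem6p5:
  fixes G :: "('g, 'm) monoid_scheme" and S :: "'g \<Rightarrow> 'a::ring set"
  assumes "group G"
    and "epsilon_strong G S"
  shows "(block_decomposable (S \<one>\<^bsub>G\<^esub>) \<longrightarrow> epsilon_finite G S)
    \<and> (left_noetherian (S \<one>\<^bsub>G\<^esub>) \<or> right_noetherian (S \<one>\<^bsub>G\<^esub>)
        \<longrightarrow> epsilon_finite G S
          \<and> (\<forall>N. N \<lhd> G \<longrightarrow> epsilon_strong (G Mod N) (induced_grading S)))"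
proof -
  interpret egr G S using assms by (simp add: egr_def egr_axioms_def)
  show ?thesis
  proof (intro conjI impI allI)
    show "epsilon_finite G S" if "block_decomposable (S \<one>\<^bsub>G\<^esub>)" using part_a that .
  next
    assume nb: "left_noetherian (S \<one>\<^bsub>G\<^esub>) \<or> right_noetherian (S \<one>\<^bsub>G\<^esub>)"
    show "epsilon_finite G S" using part_b nb .
    fix N assume "N \<lhd> G"
    then interpret qgr G S N by (simp add: qgr_def qgr_axioms_def egr_axioms)
    show "epsilon_strong (G Mod N) (induced_grading S)" using eps_strong_H part_b nb by blast
  qed
qed

end
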